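(* Let $(\Omega,\rho)$ be a quasi-metric space, $X\subseteq\Omega$ a finite dataset, and let $W=(\Omega,X,\mathcal Q)$ be the quasi-metric similarity workload whose queries are the left balls $B_\varepsilon(\omega)=\{x\in\Omega:\rho(\omega,x)\le\varepsilon\}$, $\omega\in\Omega$, $\varepsilon>0$. Let $T$ be a finite rooted tree and $B_t\subseteq\Omega$, $t\in T$, subsets such that $X\subseteq\bigcup_{t\in L(T)}B_t\subseteq\Omega$ and, for every inner node $t$, $\bigcup_{s\in C_t}(B_s\cap X)\subseteq B_t$. For every node $t$ let $f_t\colon\Omega\to\mathbb R$ be a left 1-Lipschitz function such that $\omega\in B_t$ implies $f_t(\omega)\le 0$. For each inner node $t$ define $F_t(B_\varepsilon(\omega))=\{s\in C_t: f_s(\omega)\le\varepsilon\}$. Then $(T,\{B_t\}_{t\in L(T)},\{F_t\}_{t\in I(T)})$ is a consistent indexing scheme for $W$.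
   Context: A quasi-metric on $\Omega$ is a function $\rho\colon\Omega\times\Omega\to[0,\infty)$ with $\rho(x,y)=0\iff x=y$ and $\rho(x,z)\le\rho(x,y)+\rho(y,z)$, not necessarily symmetric. A function $f\colon\Omega\to\mathbb R$ is left 1-Lipschitz if $f(x)-f(y)\le\rho(x,y)$ for all $x,y\in\Omega$. A workload is a triple $W=(\Omega,X,\mathcal Q)$ where $X\subseteq\Omega$ is finite and $\mathcal Q\subseteq 2^\Omega$. For a rooted finite tree $T$, $L(T)$ is the set of leaves, $I(T)$ the set of inner nodes, $C_t$ the set of children of an inner node $t$. An indexing scheme on $W$ is a triple $(T,\mathcal B,\mathcal F)$ where $T$ is a rooted finite tree with root $\ast$, $\mathcal B=\{B_t\subseteq\Omega: t\in L(T)\}$, and $\mathcal F=\{F_t: t\in I(T)\}$ with $F_t\colon\mathcal Q\to 2^{C_t}$. Given $Q\in\mathcal Q$, the search algorithm sets $A_0=\{\ast\}$, $A_{i+1}=\bigcup_{t\in A_i\cap I(T)}F_t(Q)$, and outputs all $x\in X\cap Q$ with $x\in B_t$ for some leaf $t$ lying in some $A_i$. The scheme is consistent if for every $Q\in\mathcal Q$ the output equals $Q\cap X$. *)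

theory Defs
  imports Complex_Main
begin

(* Quasi-metric on the whole type 'a (the type plays the role of \<Omega>). *)
definition quasi_metric :: "('a \<Rightarrow> 'a \<Rightarrow> real) \<Rightarrow> bool" where
  "quasi_metric \<rho> \<longleftrightarrow>
     (\<forall>x y. \<rho> x y \<ge> 0) \<and> (\<forall>x y. \<rho> x y = 0 \<longleftrightarrow> x = y) \<and>
     (\<forall>x y z. \<rho> x z \<le> \<rho> x y + \<rho> y z)"

definition left_lipschitz1 :: "('a \<Rightarrow> 'a \<Rightarrow> real) \<Rightarrow> ('a \<Rightarrow> real) \<Rightarrow> bool" where
  "left_lipschitz1 \<rho> f \<longleftrightarrow> (\<forall>x y. f x - f y \<le> \<rho> x y)"

definition left_ball :: "('a \<Rightarrow> 'a \<Rightarrow> real) \<Rightarrow> 'a \<Rightarrow> real \<Rightarrow> 'a set" where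
  "left_ball \<rho> w \<epsilon> = {x. \<rho> w x \<le> \<epsilon>}"

definition ball_queries :: "('a \<Rightarrow> 'a \<Rightarrow> real) \<Rightarrow> 'a set set" where
  "ball_queries \<rho> = {left_ball \<rho> w \<epsilon> | w \<epsilon>. \<epsilon> > 0}"

(* Rooted finite tree: node set N, root r, parent map par (relevant on N - {r});
   every node reaches the root by iterating par. *)
definition rooted_tree :: "'n set \<Rightarrow> 'n \<Rightarrow> ('n \<Rightarrow> 'n) \<Rightarrow> bool" where
  "rooted_tree N r par \<longleftrightarrow> finite N \<and> r \<in> N \<and> (\<forall>t\<in>N - {r}. par t \<in> N) \<and>
     (\<forall>t\<in>N. \<exists>k. (par ^^ k) t = r)"

definition children :: "'n set \<Rightarrow> 'n \<Rightarrow> ('n \<Rightarrow> 'n) \<Rightarrow> 'n \<Rightarrow> 'n set" where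
  "children N r par t = {s \<in> N. s \<noteq> r \<and> par s = t}"

definition leaves :: "'n set \<Rightarrow> 'n \<Rightarrow> ('n \<Rightarrow> 'n) \<Rightarrow> 'n set" where
  "leaves N r par = {t \<in> N. children N r par t = {}}"

definition inner_nodes :: "'n set \<Rightarrow> 'n \<Rightarrow> ('n \<Rightarrow> 'n) \<Rightarrow> 'n set" where
  "inner_nodes N r par = {t \<in> N. children N r par t \<noteq> {}}"

primrec active :: "'n set \<Rightarrow> 'n \<Rightarrow> ('n \<Rightarrow> 'n) \<Rightarrow> ('n \<Rightarrow> 'a set \<Rightarrow> 'n set) \<Rightarrow> 'a set \<Rightarrow> nat \<Rightarrow> 'n set" where
  "active N r par F Q 0 = {r}"
| "active N r par F Q (Suc i) = (\<Union>t \<in> active N r par F Q i \<inter> inner_nodes N r par. F t Q)"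

definition search_output :: "'n set \<Rightarrow> 'n \<Rightarrow> ('n \<Rightarrow> 'n) \<Rightarrow> ('n \<Rightarrow> 'a set) \<Rightarrow>
    ('n \<Rightarrow> 'a set \<Rightarrow> 'n set) \<Rightarrow> 'a set \<Rightarrow> 'a set \<Rightarrow> 'a set" where
  "search_output N r par B F X Q =
     {x \<in> X \<inter> Q. \<exists>i. \<exists>t \<in> active N r par F Q i \<inter> leaves N r par. x \<in> B t}"

definition consistent_indexing_scheme :: "'n set \<Rightarrow> 'n \<Rightarrow> ('n \<Rightarrow> 'n) \<Rightarrow> ('n \<Rightarrow> 'a set) \<Rightarrow>
    ('n \<Rightarrow> 'a set \<Rightarrow> 'n set) \<Rightarrow> 'a set \<Rightarrow> 'a set set \<Rightarrow> bool" where
  "consistent_indexing_scheme N r par B F X Qs \<longleftrightarrow>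
     rooted_tree N r par \<and> finite X \<and>
     (\<forall>t \<in> inner_nodes N r par. \<forall>Q \<in> Qs. F t Q \<subseteq> children N r par t) \<and>
     (\<forall>Q \<in> Qs. search_output N r par B F X Q = Q \<inter> X)"

end

theory Submission
  imports Defs
begin

theorem theorem3p3:
  fixes \<rho> :: "'a \<Rightarrow> 'a \<Rightarrow> real"
    and X :: "'a set"
    and N :: "'n set" and r :: 'n and par :: "'n \<Rightarrow> 'n"
    and B :: "'n \<Rightarrow> 'a set"
    and f :: "'n \<Rightarrow> 'a \<Rightarrow> real"
    and rep :: "'a set \<Rightarrow> 'a \<times> real"
    and F :: "'n \<Rightarrow> 'a set \<Rightarrow> 'n set"
  assumes qm: "quasi_metric \<rho>"
    and finX: "finite X"
    and tree: "rooted_tree N r par"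
    and cover: "X \<subseteq> (\<Union>t \<in> leaves N r par. B t)"
    and nested: "\<forall>t \<in> inner_nodes N r par.
                   (\<Union>s \<in> children N r par t. B s \<inter> X) \<subseteq> B t"
    and lip: "\<forall>t \<in> N. left_lipschitz1 \<rho> (f t)"
    and neg: "\<forall>t \<in> N. \<forall>w \<in> B t. f t w \<le> 0"
    and rep: "\<forall>Q \<in> ball_queries \<rho>. snd (rep Q) > 0 \<and> Q = left_ball \<rho> (fst (rep Q)) (snd (rep Q))"
    and F_def: "\<forall>t \<in> inner_nodes N r par. \<forall>Q \<in> ball_queries \<rho>.
                  F t Q = {s \<in> children N r par t. f s (fst (rep Q)) \<le> snd (rep Q)}"
  shows "consistent_indexing_scheme N r par B F X (ball_queries \<rho>)"
proof -
  have Fsub: "\<forall>t \<in> inner_nodes N r par. \<forall>Q \<in> ball_queries \<rho>. F t Q \<subseteq> children N r par t"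
    using F_def by auto
  have main: "search_output N r par B F X Q = Q \<inter> X" if Qq: "Q \<in> ball_queries \<rho>" for Q
  proof
    show "search_output N r par B F X Q \<subseteq> Q \<inter> X" unfolding search_output_def by auto
  next
    define w where "w = fst (rep Q)"
    define e where "e = snd (rep Q)"
    have Qe: "Q = left_ball \<rho> w e" using rep Qq unfolding w_def e_def by auto
    have FQ: "\<And>t. t \<in> inner_nodes N r par \<Longrightarrow> F t Q = {s \<in> children N r par t. f s w \<le> e}"
      using F_def Qq unfolding w_def e_def by auto
    show "Q \<inter> X \<subseteq> search_output N r par B F X Q"
    proof
      fix x assume xQX: "x \<in> Q \<inter> X"
      then have xw: "\<rho> w x \<le> e" using Qe unfolding left_ball_def by auto
      from xQX cover obtain t where tL: "t \<in> leaves N r par" and xt: "x \<in> B t" by blast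
      have tN: "t \<in> N" using tL unfolding leaves_def by auto
      define a where "a = (\<lambda>m. (par ^^ m) t)"
      have aS: "a (Suc m) = par (a m)" for m unfolding a_def by simp
      have ex: "\<exists>k. a k = r" using tree tN unfolding rooted_tree_def a_def by auto
      define k where "k = (LEAST k. a k = r)"
      have ak: "a k = r" unfolding k_def using ex by (rule LeastI_ex)
      have anr: "m < k \<Longrightarrow> a m \<noteq> r" for m unfolding k_def using not_less_Least by blast
      have P1: "m \<le> k \<longrightarrow> a m \<in> N \<and> x \<in> B (a m)" for m
      proof (induction m)
        case 0 then show ?case using tN xt unfolding a_def by simp
      next
        case (Suc m)
        show ?case
        proof
          assume "Suc m \<le> k"
          then have m: "a m \<in> N" "x \<in> B (a m)" "a m \<noteq> r" using Suc anr by auto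
          then have N1: "a (Suc m) \<in> N" using tree aS unfolding rooted_tree_def by auto
          have ch: "a m \<in> children N r par (a (Suc m))" using m aS unfolding children_def by auto
          then have "a (Suc m) \<in> inner_nodes N r par" using N1 unfolding inner_nodes_def by auto
          then have "x \<in> B (a (Suc m))" using nested ch m xQX by blast
          then show "a (Suc m) \<in> N \<and> x \<in> B (a (Suc m))" using N1 by simp
        qed
      qed
      have P2: "j \<le> k \<longrightarrow> a (k - j) \<in> active N r par F Q j" for j
      proof (induction j)
        case 0 then show ?case using ak by simp
      next
        case (Suc j)
        show ?case
        proof
          assume jk: "Suc j \<le> k"
          define m where "m = k - Suc j"
          have km: "k - j = Suc m" using jk unfolding m_def by simp
          have A: "a (Suc m) \<in> active N r par F Q j" using Suc jk km by simp
          have m: "a m \<in> N" "x \<in> B (a m)" "a m \<noteq> r" using P1[of m] anr[of m] jk unfolding m_def by auto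
          have N1: "a (Suc m) \<in> N" using P1[of "Suc m"] jk unfolding m_def by auto
          have ch: "a m \<in> children N r par (a (Suc m))" using m aS unfolding children_def by auto
          then have inn: "a (Suc m) \<in> inner_nodes N r par" using N1 unfolding inner_nodes_def by auto
          have "f (a m) x \<le> 0" using neg m by auto
          moreover have "f (a m) w - f (a m) x \<le> \<rho> w x" using lip m unfolding left_lipschitz1_def by auto
          ultimately have "f (a m) w \<le> e" using xw by linarith
          then have "a m \<in> F (a (Suc m)) Q" using FQ[OF inn] ch by auto
          then show "a (k - Suc j) \<in> active N r par F Q (Suc j)"
            using A inn unfolding m_def[symmetric] by auto
        qed
      qed
      have "t \<in> active N r par F Q k" using P2[of k] unfolding a_def by simp
      then show "x \<in> search_output N r par B F X Q"
        using xQX tL xt unfolding search_output_def by blast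
    qed
  qed
  show ?thesis unfolding consistent_indexing_scheme_def using tree finX Fsub main by blast
qed

end
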